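(* Let $\lambda$ be the real root and $\mu,\bar\mu$ the non-real roots of $t^3-t-2$. Then (i) $\mu^n\notin\mathbb R$ for every $n\ge1$; (ii) the set $\{\arg(\mu^n)\mid n\ge1\}$ is dense in $[0,2\pi]$. *)

theory Defs
  imports "HOL-Complex_Analysis.Complex_Analysis"
begin

text \<open>Argument normalised to take values in [0, 2*pi) (the library's Arg takes values in (-pi, pi]).\<close>
definition arg2pi :: "complex \<Rightarrow> real" where
  "arg2pi z = (if Arg z < 0 then Arg z + 2 * pi else Arg z)"

end

theory Submission
  imports Defs
begin

fun cf :: "nat \<Rightarrow> int \<times> int \<times> int" where
  "cf 0 = (1,0,0)"
| "cf (Suc n) = (case cf n of (a,b,c) \<Rightarrow> (2*c, a+c, b))"

lemma cf_pow:
  fixes z :: "'a::comm_ring_1"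
  assumes "z^3 - z - 2 = 0"
  shows "z^n = of_int (fst (cf n)) + of_int (fst (snd (cf n))) * z + of_int (snd (snd (cf n))) * z^2"
proof (induction n)
  case 0 then show ?case by simp
next
  case (Suc n)
  obtain a b c where abc: "cf n = (a,b,c)" by (metis prod_cases3)
  have z3: "z^3 = z + 2" using assms by (simp add: algebra_simps)
  have "z^Suc n = z * (of_int a + of_int b * z + of_int c * z^2)" using Suc abc by simp
  also have "\<dots> = of_int a * z + of_int b * z^2 + of_int c * z^3" by (simp add: algebra_simps power2_eq_square power3_eq_cube)
  also have "\<dots> = of_int (2*c) + of_int (a+c) * z + of_int b * z^2" unfolding z3 by (simp add: algebra_simps)
  finally show ?case using abc by simp
qed

lemma cube_aux: fixes d :: int assumes "d \<ge> 2" shows "d^3 - d \<ge> 6"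
proof -
  have "d*d \<ge> 2*2" using assms by (intro mult_mono) auto
  then have "d* (d*d - 1) \<ge> 2*3" using assms by (intro mult_mono) auto
  then show ?thesis by (simp add: power3_eq_cube algebra_simps)
qed

lemma cube_aux2: "\<bar>(b'::int)^3 - b'\<bar> \<ge> 6" if "b' \<ge> 2 \<or> b' \<le> -2"
proof (cases "b' \<ge> 2")
  case True then show ?thesis using cube_aux[of b'] by simp
next
  case False
  then have "-b' \<ge> 2" using that by auto
  from cube_aux[OF this] show ?thesis by (simp add: power3_eq_cube)
qed

lemma no_int_sol:
  fixes b c :: int
  assumes "c \<noteq> 0"
  shows "b^3 \<noteq> b*c^2 + 2*c^3"
proof
  assume eq: "b^3 = b*c^2 + 2*c^3"
  define g where "g = gcd b c"
  have g0: "g \<noteq> 0" using assms g_def by simp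
  obtain b' c' where b': "b = b'*g" and c': "c = c'*g" and cop: "coprime b' c'"
    using gcd_coprime_exists[of b c] g0 unfolding g_def by blast
  have "g^3 * b'^3 = g^3 * (b'*c'^2 + 2*c'^3)" using eq unfolding b' c'
    by (simp add: power_mult_distrib power2_eq_square power3_eq_cube algebra_simps)
  then have eq': "b'^3 = b'*c'^2 + 2*c'^3" using g0 by simp
  have "c' dvd b'^3" using eq' by (simp add: power2_eq_square power3_eq_cube)
  then have "is_unit c'" using cop by (meson coprime_absorb_right coprime_power_left_iff)
  then have "c' = 1 \<or> c' = -1" by auto
  then have e2: "b'^3 - b' = 2 \<or> b'^3 - b' = -2" using eq' by auto
  show False
  proof (cases "b' \<ge> 2 \<or> b' \<le> -2")
    case True
    have "\<bar>b'^3 - b'\<bar> \<ge> 6" using cube_aux2 True by blast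
    then show False using e2 by auto
  next
    case False
    then have "b' \<in> {-1,0,1}" by auto
    then show False using e2 by auto
  qed
qed

lemma part1:
  fixes \<mu> :: complex
  assumes root: "\<mu> ^ 3 - \<mu> - 2 = 0"
    and nonreal: "\<mu> \<notin> \<real>" and n1: "n \<ge> 1"
  shows "\<mu> ^ n \<notin> \<real>"
proof
  assume r: "\<mu> ^ n \<in> \<real>"
  define m where "m = cnj \<mu>"
  have "cnj (\<mu> ^ 3 - \<mu> - 2) = 0" using root by simp
  then have mroot: "m^3 - m - 2 = 0" unfolding m_def by simp
  have neq: "\<mu> \<noteq> m" using nonreal unfolding m_def by (metis Reals_cnj_iff)
  have mn: "m^n = \<mu>^n" using r unfolding m_def by (metis Reals_cnj_iff complex_cnj_power)
  define s where "s = \<mu> + m"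
  have "(\<mu> - m) * (\<mu>^2 + \<mu>*m + m^2 - 1) = (\<mu> ^ 3 - \<mu> - 2) - (m^3 - m - 2)"
    by (simp add: algebra_simps power2_eq_square power3_eq_cube)
  then have q1: "\<mu>^2 + \<mu>*m + m^2 = 1" using root mroot neq by simp
  have e: "\<mu>*m = s^2 - 1" using q1 unfolding s_def by (simp add: algebra_simps power2_eq_square)
  have "s^3 = \<mu>^3 + m^3 + 3 * (\<mu> * m) * s" unfolding s_def by (simp add: algebra_simps power2_eq_square power3_eq_cube)
  also have "\<dots> = (\<mu> + 2) + (m + 2) + 3 * (s^2 - 1) * s" unfolding e using root mroot
    by (simp add: algebra_simps)
  also have "\<dots> = s + 4 + 3 * (s^2 - 1) * s" unfolding s_def by simp
  finally have "2 * (s^3 - s + 2) = 0" by (simp add: algebra_simps power2_eq_square power3_eq_cube)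
  then have s3: "s^3 - s + 2 = 0" by (metis mult_eq_0_iff zero_neq_numeral)
  obtain a b c where abc: "cf n = (a,b,c)" by (metis prod_cases3)
  have hmu: "\<mu>^n = of_int a + of_int b * \<mu> + of_int c * \<mu>^2" using cf_pow[OF root, of n] abc by simp
  have hm: "m^n = of_int a + of_int b * m + of_int c * m^2" using cf_pow[OF mroot, of n] abc by simp
  have "(\<mu> - m) * (of_int b + of_int c * s) = 0"
    using hmu hm mn unfolding s_def by (simp add: algebra_simps power2_eq_square)
  then have "of_int b + of_int c * s = (0::complex)" using neq by simp
  then have bcs: "(of_int b :: complex) = - of_int c * s" by (simp add: add_eq_0_iff)
  have c0: "c = 0"
  proof (rule ccontr)
    assume "c \<noteq> 0"
    have "(of_int (b^3) :: complex) - of_int (b*c^2 + 2*c^3) = - (of_int c ^ 3 * (s^3 - s + 2))"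
      using bcs by (simp add: algebra_simps power2_eq_square power3_eq_cube)
    then have "(of_int (b^3) :: complex) = of_int (b*c^2 + 2*c^3)" using s3 by simp
    then have "b^3 = b*c^2 + 2*c^3" using of_int_eq_iff by blast
    then show False using no_int_sol \<open>c \<noteq> 0\<close> by blast
  qed
  then have b0: "b = 0" using bcs by simp
  define lr where "lr = - 2 * Re \<mu>"
  have sl: "s = - of_real lr" unfolding s_def m_def lr_def complex_add_cnj by simp
  have lroot: "(of_real lr :: complex)^3 - of_real lr - 2 = 0" using s3 sl
    by (simp add: algebra_simps power3_eq_cube)
  have "(of_real lr :: complex)^n = of_int a" using cf_pow[OF lroot, of n] abc b0 c0 by simp
  then have eqn: "\<mu>^n = (of_real lr :: complex)^n" using hmu b0 c0 by simp
  have "of_real ((norm \<mu>)\<^sup>2) = \<mu> * m" unfolding m_def by (rule complex_norm_square)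
  also have "\<dots> = s^2 - 1" by (rule e)
  also have "\<dots> = of_real (lr^2 - 1)" using sl by simp
  finally have nm: "(norm \<mu>)\<^sup>2 = lr^2 - 1" using of_real_eq_iff by blast
  have "norm \<mu> ^ n = \<bar>lr\<bar> ^ n" using arg_cong[OF eqn, of norm] by (simp add: norm_power)
  then have "norm \<mu> = \<bar>lr\<bar>" using n1 by (simp add: power_eq_imp_eq_base)
  then show False using nm by simp
qed

lemma arg2pi_rcis:
  assumes "r > 0" "0 \<le> t" "t < 2*pi"
  shows "arg2pi (rcis r t) = t"
proof (cases "t \<le> pi")
  case True
  have "Arg (rcis r t) = t" using assms True by (intro Arg_unique') auto
  then show ?thesis using assms unfolding arg2pi_def by simp
next
  case False
  have "rcis r t = rcis r (t - 2*pi)"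
    by (simp add: rcis_def cis.ctr sin_diff cos_diff)
  then have "Arg (rcis r t) = t - 2*pi" using assms False by (intro Arg_unique') auto
  then show ?thesis using assms False unfolding arg2pi_def by simp
qed

theorem lemma14p1:
  fixes \<mu> :: complex
  assumes root: "\<mu> ^ 3 - \<mu> - 2 = 0"
    and nonreal: "\<mu> \<notin> \<real>"
  shows "(\<forall>n::nat. n \<ge> 1 \<longrightarrow> \<mu> ^ n \<notin> \<real>)
         \<and> {0..2 * pi} \<subseteq> closure {arg2pi (\<mu> ^ n) | n::nat. n \<ge> 1}"
proof
  show P1: "\<forall>n::nat. n \<ge> 1 \<longrightarrow> \<mu> ^ n \<notin> \<real>" using part1[OF root nonreal] by blast
  have mu0: "\<mu> \<noteq> 0" using root by auto
  define \<theta> where "\<theta> = Arg \<mu> / (2*pi)"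
  have powk: "\<mu>^k = rcis (norm \<mu> ^ k) (real k * Arg \<mu>)" for k
    by (metis DeMoivre2 rcis_cmod_Arg)
  have irr: "\<theta> \<notin> \<rat>"
  proof
    assume "\<theta> \<in> \<rat>"
    then obtain p q where pq: "\<theta> = of_int p / of_int q" and q0: "q > 0" by (meson Rats_cases')
    define k where "k = nat q"
    have k1: "k \<ge> 1" using q0 k_def by simp
    have "real k * Arg \<mu> = 2 * pi * of_int p"
      using pq q0 unfolding \<theta>_def k_def by (simp add: field_simps)
    then have "\<mu>^k = of_real (norm \<mu> ^ k)" using powk[of k] by (simp add: rcis_def)
    then show False using P1 k1 by (metis Reals_of_real)
  qed
  show "{0..2 * pi} \<subseteq> closure {arg2pi (\<mu> ^ n) | n::nat. n \<ge> 1}"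
  proof
    fix x assume x: "x \<in> {0..2*pi}"
    show "x \<in> closure {arg2pi (\<mu> ^ n) | n::nat. n \<ge> 1}"
    proof (subst closure_approachable, intro allI impI)
      fix e :: real assume e: "e > 0"
      have al: "0 \<le> x / (2*pi)" "x / (2*pi) \<le> 1" using x by auto
      obtain k :: nat where k: "k > 0" "\<bar>frac (real k * \<theta>) - x/(2*pi)\<bar> < e/(2*pi)"
        using Kronecker_approx_1_explicit[OF irr al] e by (metis divide_pos_pos pi_gt_zero zero_less_numeral mult_pos_pos)
      have "real k * Arg \<mu> = 2*pi * frac (real k * \<theta>) + 2*pi * of_int \<lfloor>real k * \<theta>\<rfloor>"
        unfolding \<theta>_def frac_def by (simp add: field_simps)
      then have "\<mu>^k = rcis (norm \<mu> ^ k) (2*pi * frac (real k * \<theta>))"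
        using powk[of k] by (simp add: rcis_def cis_mult[symmetric])
      then have "arg2pi (\<mu>^k) = 2*pi * frac (real k * \<theta>)"
        using mu0 by (simp add: arg2pi_rcis frac_lt_1)
      moreover have "\<bar>2*pi * frac (real k * \<theta>) - x\<bar> < e"
      proof -
        have "\<bar>2*pi * frac (real k * \<theta>) - x\<bar> = 2*pi * \<bar>frac (real k * \<theta>) - x/(2*pi)\<bar>"
          by (simp add: field_simps abs_mult[symmetric])
        also have "\<dots> < 2*pi * (e/(2*pi))" using k by (intro mult_strict_left_mono) auto
        finally show ?thesis by simp
      qed
      moreover have "arg2pi (\<mu>^k) \<in> {arg2pi (\<mu> ^ n) | n::nat. n \<ge> 1}"
        using k(1) by (intro CollectI exI[of _ k]) simp
      ultimately show "\<exists>y\<in>{arg2pi (\<mu> ^ n) | n::nat. n \<ge> 1}. dist y x < e"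
        by (intro bexI[of _ "arg2pi (\<mu>^k)"]) (auto simp: dist_real_def)
    qed
  qed
qed

end
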